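(* Assume (C1)–(C4). Define the set-valued map $G$ on $[0,1]\times\mathbb R^n$ by $$G(t,y)=\left\{\left(\frac{\rho}{L(t,y,w)+\beta},\;\frac{\rho\, g(t,y)w}{L(t,y,w)+\beta}\right)\in\mathbb R\times\mathbb R^n:\ w\in\mathbb R^m,\ \rho\in[0,1]\right\}.$$ Then $G(t,y)$ is a nonempty convex compact set for every $(t,y)$, and $G$ is Lipschitz continuous (with respect to the Hausdorff distance) on $\Omega$.
   Context: Let $n,m\ge1$; $|\cdot|$ denotes the Euclidean norm (operator norm for matrices) and $B_n$ the closed unit ball of $\mathbb R^n$. Let $L:[0,1]\times\mathbb R^n\times\mathbb R^m\to\mathbb R$ and $g:[0,1]\times\mathbb R^n\to\mathbb R^{n\times m}$ be continuously differentiable. (C1) there is a function $\theta:[0,\infty)\to\mathbb R$ with $L(t,x,u)\ge\theta(|u|)>0$ for all $t,x,u$ and $\lim_{r\to\infty}r/\theta(r)=0$; (C2) there is $\mu>0$ with $L(t,x,u)+\langle\nabla_uL(t,x,u),v-u\rangle+\frac{\mu}{2}|v-u|^2\le L(t,x,v)$ for all $t,x,u,v$; (C3) there are constants $\xi>0,\delta>0$ with $|\nabla_{(t,x)}L(t,x,u)|\,|g(t,x)u|\le\xi L(t,x,u)+\delta$ for all $t,x,u$; (C4) there are constants $c_g>0$, $c_{\nabla g}>0$ with $|g(t,x)|\le c_g$ and $|\nabla_{(t,x)}g(t,x)|\le c_{\nabla g}$ for all $t,x$. Constants: fix $r_0>0$ such that $\theta(r)\ge r$ for all $r\ge r_0$;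 $c=r_0+\int_0^1L(t,0,0)\,dt$; $\Omega=[0,1]\times c_g c\,B_n$; $\sigma(r)=\max_{(t,x)\in\Omega,\,|u|\le r}\big(\langle\nabla_uL(t,x,u),u\rangle-L(t,x,u)\big)$; fix $T_0\in(0,1)$ such that $\beta:=\sigma((c+1)/T_0)>\delta/\xi$. *)

theory Defs
  imports "HOL-Analysis.Analysis"
begin

definition C1_on ::
  "'a::real_normed_vector set \<Rightarrow> ('a \<Rightarrow> 'b::real_normed_vector) \<Rightarrow> ('a \<Rightarrow> ('a \<Rightarrow>\<^sub>L 'b)) \<Rightarrow> bool"
  where "C1_on S f f' \<longleftrightarrow>
           (\<forall>p\<in>S. (f has_derivative blinfun_apply (f' p)) (at p within S)) \<and> continuous_on S f'"

definition hausdorff_dist :: "'a::metric_space set \<Rightarrow> 'a set \<Rightarrow> real"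
  where "hausdorff_dist A B =
           max (SUP a\<in>A. infdist a B) (SUP b\<in>B. infdist b A)"

end

theory Submission
  imports Defs
begin

locale gset =
  fixes L :: "real \<Rightarrow> real^'n \<Rightarrow> real^'m \<Rightarrow> real"
    and L' :: "real \<times> (real^'n) \<times> (real^'m) \<Rightarrow> (real \<times> (real^'n) \<times> (real^'m)) \<Rightarrow>\<^sub>L real"
    and g :: "real \<Rightarrow> real^'n \<Rightarrow> ((real^'m) \<Rightarrow>\<^sub>L (real^'n))"
    and g' :: "real \<times> (real^'n) \<Rightarrow> (real \<times> (real^'n)) \<Rightarrow>\<^sub>L ((real^'m) \<Rightarrow>\<^sub>L (real^'n))"
    and \<theta> :: "real \<Rightarrow> real"
    and \<xi> \<delta> c_g c_dg r\<^sub>0 \<beta> :: real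
  assumes L_C1: "C1_on ({0..1} \<times> UNIV \<times> UNIV) (\<lambda>(t, x, u). L t x u) L'"
    and g_C1: "C1_on ({0..1} \<times> UNIV) (\<lambda>(t, x). g t x) g'"
    and C1a: "\<And>t x u. t \<in> {0..1} \<Longrightarrow> L t x u \<ge> \<theta> (norm u) \<and> \<theta> (norm u) > 0"
    and C1b: "((\<lambda>r. r / \<theta> r) \<longlongrightarrow> 0) at_top"
    and C2: "\<And>t x u v. t \<in> {0..1} \<Longrightarrow>
               L t x u + L' (t, x, u) (0, 0, v - u) \<le> L t x v"
    and xi_pos: "\<xi> > 0" and delta_pos: "\<delta> > 0"
    and C3: "\<And>t x u. t \<in> {0..1} \<Longrightarrow>
               onorm (\<lambda>(s, y). L' (t, x, u) (s, y, 0)) * norm (g t x u) \<le> \<xi> * L t x u + \<delta>"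
    and C4: "\<And>t x. t \<in> {0..1} \<Longrightarrow> norm (g t x) \<le> c_g \<and> norm (g' (t, x)) \<le> c_dg"
    and r0_pos: "r\<^sub>0 > 0" and r0: "\<And>r. r \<ge> r\<^sub>0 \<Longrightarrow> \<theta> r \<ge> r"
    and beta_pos: "\<beta> > 0"
begin

definition G where "G = (\<lambda>t y. {(\<rho> / (L t y w + \<beta>), (\<rho> / (L t y w + \<beta>)) *\<^sub>R g t y w)
                          | w \<rho>. \<rho> \<in> {0..1}})"

lemma L_pos: "t \<in> {0..1} \<Longrightarrow> L t x u > 0"
  using C1a[where t=t and x=x and u=u] by linarith

lemma Lb_pos: "t \<in> {0..1} \<Longrightarrow> L t x u + \<beta> > 0"
  using L_pos[where t=t and x=x and u=u] beta_pos by linarith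

lemma w_bound: assumes "t \<in> {0..1}" shows "norm w / (L t x w + \<beta>) \<le> max (r\<^sub>0 / \<beta>) 1"
proof (cases "norm w \<ge> r\<^sub>0")
  case True
  then have "norm w \<le> L t x w" using r0[OF True] C1a[OF assms, where x=x and u=w] by linarith
  then have "norm w / (L t x w + \<beta>) \<le> 1" using Lb_pos[OF assms, where x=x and u=w] beta_pos by (simp add: divide_le_eq)
  then show ?thesis by linarith
next
  case False
  have "norm w / (L t x w + \<beta>) \<le> r\<^sub>0 / (L t x w + \<beta>)"
    using False Lb_pos[OF assms, where x=x and u=w] by (simp add: divide_right_mono)
  also have "\<dots> \<le> r\<^sub>0 / \<beta>" using L_pos[OF assms, where x=x and u=w] r0_pos beta_pos
    by (intro divide_left_mono) auto
  finally show ?thesis by linarith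
qed

lemma L_cont: "continuous_on ({0..1} \<times> UNIV \<times> UNIV) (\<lambda>(t, x, u). L t x u)"
  using L_C1 unfolding C1_on_def
  by (meson continuous_on_eq_continuous_within has_derivative_continuous)

lemma g_cont: "continuous_on ({0..1} \<times> UNIV) (\<lambda>(t, x). g t x)"
  using g_C1 unfolding C1_on_def
  by (meson continuous_on_eq_continuous_within has_derivative_continuous)

lemma Lw_cont: assumes "t \<in> {0..1}" shows "continuous_on UNIV (\<lambda>w. L t x w)"
proof -
  have "continuous_on UNIV ((\<lambda>(t, x, u). L t x u) \<circ> (\<lambda>w. (t, x, w)))"
    by (rule continuous_on_compose[OF _ continuous_on_subset[OF L_cont]]) (use assms in \<open>auto intro!: continuous_intros\<close>)
  then show ?thesis by (simp add: o_def)
qed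

lemma L_convex:
  assumes t: "t \<in> {0..1}" and lam: "0 \<le> lam" "lam \<le> 1"
  shows "L t x (lam *\<^sub>R w1 + (1 - lam) *\<^sub>R w2) \<le> lam * L t x w1 + (1 - lam) * L t x w2"
proof -
  define w where "w = lam *\<^sub>R w1 + (1 - lam) *\<^sub>R w2"
  define D where "D = (\<lambda>h. L' (t, x, w) (0, 0, h))"
  have lin: "linear D" unfolding D_def
  proof (intro linearI)
    fix a b :: "real^'m" and r :: real
    have "((0::real), (0::real^'n), a + b) = (0, 0, a) + (0, 0, b)" by simp
    then show "L' (t, x, w) (0, 0, a + b) = L' (t, x, w) (0, 0, a) + L' (t, x, w) (0, 0, b)"
      by (metis blinfun.add_right)
    have "((0::real), (0::real^'n), r *\<^sub>R b) = r *\<^sub>R (0, 0, b)" by simp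
    then show "L' (t, x, w) (0, 0, r *\<^sub>R b) = r *\<^sub>R L' (t, x, w) (0, 0, b)"
      by (metis blinfun.scaleR_right)
  qed
  have 1: "L t x w + D (w1 - w) \<le> L t x w1" using C2[OF t] by (simp add: D_def)
  have 2: "L t x w + D (w2 - w) \<le> L t x w2" using C2[OF t] by (simp add: D_def)
  have "lam *\<^sub>R (w1 - w) + (1 - lam) *\<^sub>R (w2 - w) = 0"
    unfolding w_def by (simp add: algebra_simps)
  then have "lam * D (w1 - w) + (1 - lam) * D (w2 - w) = 0"
    using linear_add[OF lin] linear_scale[OF lin] linear_0[OF lin]
    by (metis real_scaleR_def)
  then have "lam * (L t x w + D (w1 - w)) + (1 - lam) * (L t x w + D (w2 - w)) = L t x w"
    by (simp add: algebra_simps)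
  moreover have "lam * (L t x w + D (w1 - w)) \<le> lam * L t x w1" using 1 lam by (simp add: mult_left_mono)
  moreover have "(1 - lam) * (L t x w + D (w2 - w)) \<le> (1 - lam) * L t x w2" using 2 lam by (simp add: mult_left_mono)
  ultimately show ?thesis unfolding w_def by linarith
qed

lemma G_mem: "\<rho> \<in> {0..1} \<Longrightarrow> (\<rho> / (L t y w + \<beta>), (\<rho> / (L t y w + \<beta>)) *\<^sub>R g t y w) \<in> G t y"
  unfolding G_def by blast

lemma G_memE:
  assumes "P \<in> G t y"
  obtains w \<rho> where "\<rho> \<in> {0..1}" "P = (\<rho> / (L t y w + \<beta>), (\<rho> / (L t y w + \<beta>)) *\<^sub>R g t y w)"
  using assms unfolding G_def by blast

lemma G_mem2:
  assumes t: "t \<in> {0..1}" and s: "0 \<le> s" "s * (L t y w + \<beta>) \<le> 1"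
  shows "(s, s *\<^sub>R g t y w) \<in> G t y"
proof -
  have pos: "L t y w + \<beta> > 0" by (rule Lb_pos[OF t])
  have "s = (s * (L t y w + \<beta>)) / (L t y w + \<beta>)" using pos by simp
  moreover have "s * (L t y w + \<beta>) \<in> {0..1}" using s pos by simp
  ultimately show ?thesis using G_mem[of "s * (L t y w + \<beta>)" t y w] by metis
qed

lemma G_memE2:
  assumes t: "t \<in> {0..1}" and "P \<in> G t y"
  obtains w s where "0 \<le> s" "s * (L t y w + \<beta>) \<le> 1" "P = (s, s *\<^sub>R g t y w)"
proof -
  obtain w \<rho> where r: "\<rho> \<in> {0..1}" "P = (\<rho> / (L t y w + \<beta>), (\<rho> / (L t y w + \<beta>)) *\<^sub>R g t y w)"
    using G_memE[OF assms(2)] by blast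
  have pos: "L t y w + \<beta> > 0" by (rule Lb_pos[OF t])
  show ?thesis
    by (rule that[of "\<rho> / (L t y w + \<beta>)" w]) (use r pos in auto)
qed

lemma G_zero: "t \<in> {0..1} \<Longrightarrow> (0, 0) \<in> G t y"
  using G_mem2[of t 0 y 0] by simp

lemma G_convex:
  assumes t: "t \<in> {0..1}"
  shows "convex (G t y)"
  unfolding convex_def
proof (intro ballI allI impI)
  fix P1 P2 and u v :: real
  assume P1: "P1 \<in> G t y" and P2: "P2 \<in> G t y" and uv: "0 \<le> u" "0 \<le> v" "u + v = 1"
  obtain w1 s1 where 1: "0 \<le> s1" "s1 * (L t y w1 + \<beta>) \<le> 1" "P1 = (s1, s1 *\<^sub>R g t y w1)"
    using G_memE2[OF t P1] by blast
  obtain w2 s2 where 2: "0 \<le> s2" "s2 * (L t y w2 + \<beta>) \<le> 1" "P2 = (s2, s2 *\<^sub>R g t y w2)"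
    using G_memE2[OF t P2] by blast
  define s where "s = u * s1 + v * s2"
  have s0: "s \<ge> 0" unfolding s_def using 1 2 uv by simp
  have eq: "u *\<^sub>R P1 + v *\<^sub>R P2 = (s, g t y (u *\<^sub>R s1 *\<^sub>R w1 + v *\<^sub>R s2 *\<^sub>R w2))"
    unfolding 1 2 s_def by (simp add: blinfun.add_right blinfun.scaleR_right)
  show "u *\<^sub>R P1 + v *\<^sub>R P2 \<in> G t y"
  proof (cases "s = 0")
    case True
    then have "u * s1 = 0" "v * s2 = 0" using 1 2 uv unfolding s_def
      by (smt (verit) mult_nonneg_nonneg)+
    then have "u *\<^sub>R s1 *\<^sub>R w1 + v *\<^sub>R s2 *\<^sub>R w2 = 0" by auto
    then show ?thesis using eq True G_zero[OF t, of y] by simp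
  next
    case False
    then have spos: "s > 0" using s0 by simp
    define lam where "lam = u * s1 / s"
    have lam1: "1 - lam = v * s2 / s" unfolding lam_def using spos by (simp add: field_simps s_def)
    have lam0: "0 \<le> lam" "lam \<le> 1" unfolding lam_def using spos 1 2 uv
      by (auto simp: field_simps s_def)
    define w where "w = (1/s) *\<^sub>R (u *\<^sub>R s1 *\<^sub>R w1 + v *\<^sub>R s2 *\<^sub>R w2)"
    have wl: "w = lam *\<^sub>R w1 + (1 - lam) *\<^sub>R w2"
      unfolding w_def lam1 unfolding lam_def by (simp add: scaleR_add_right)
    have "L t y w \<le> lam * L t y w1 + (1 - lam) * L t y w2"
      unfolding wl by (rule L_convex[OF t lam0])
    then have "s * (L t y w + \<beta>) \<le> s * (lam * L t y w1 + (1 - lam) * L t y w2 + \<beta>)"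
      using spos by (simp add: mult_left_mono)
    also have "\<dots> = u * (s1 * (L t y w1 + \<beta>)) + v * (s2 * (L t y w2 + \<beta>))"
    proof -
      have a: "s * lam = u * s1" unfolding lam_def using spos by simp
      have b: "s * (1 - lam) = v * s2" unfolding lam1 using spos by simp
      have "s * (lam * L t y w1 + (1 - lam) * L t y w2 + \<beta>)
          = (s * lam) * L t y w1 + (s * (1 - lam)) * L t y w2 + s * \<beta>" by (simp add: algebra_simps)
      also have "\<dots> = u * (s1 * (L t y w1 + \<beta>)) + v * (s2 * (L t y w2 + \<beta>))"
        by (simp only: a b) (simp add: s_def algebra_simps)
      finally show ?thesis .
    qed
    also have "\<dots> \<le> u * 1 + v * 1" using 1 2 uv
      by (intro add_mono mult_left_mono) auto
    finally have "s * (L t y w + \<beta>) \<le> 1" using uv by simp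
    from G_mem2[OF t s0 this] have "(s, s *\<^sub>R g t y w) \<in> G t y" .
    moreover have "s *\<^sub>R g t y w = g t y (u *\<^sub>R s1 *\<^sub>R w1 + v *\<^sub>R s2 *\<^sub>R w2)"
      unfolding w_def using spos by (simp add: blinfun.scaleR_right)
    ultimately show ?thesis using eq by simp
  qed
qed

lemma gw_bound: assumes t: "t \<in> {0..1}" shows "norm (g t y w) \<le> c_g * norm w"
proof -
  have "norm (g t y w) \<le> norm (g t y) * norm w" by (rule norm_blinfun)
  also have "\<dots> \<le> c_g * norm w" using C4[OF t, of y] by (intro mult_right_mono) auto
  finally show ?thesis .
qed

lemma cg_nonneg: "c_g \<ge> 0"
proof -
  have "norm (g 0 0) \<le> c_g" using C4[of 0 0] by simp
  then show ?thesis using norm_ge_zero[of "g 0 0"] by linarith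
qed

lemma cdg_nonneg: "c_dg \<ge> 0"
proof -
  have "norm (g' (0, 0)) \<le> c_dg" using C4[of 0 0] by simp
  then show ?thesis using norm_ge_zero[of "g' (0,0)"] by linarith
qed

lemma sw_bound: assumes t: "t \<in> {0..1}" and s: "0 \<le> s" "s * (L t y w + \<beta>) \<le> 1"
  shows "s * norm w \<le> max (r\<^sub>0 / \<beta>) 1"
proof -
  have pos: "L t y w + \<beta> > 0" by (rule Lb_pos[OF t])
  have sle: "s \<le> 1 / (L t y w + \<beta>)" using s pos by (simp add: field_simps)
  have "s * norm w \<le> norm w / (L t y w + \<beta>)"
    using mult_right_mono[OF sle norm_ge_zero[of w]] by simp
  then show ?thesis using w_bound[OF t, of w y] by linarith
qed

lemma G_bounded:
  assumes t: "t \<in> {0..1}"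
  shows "bounded (G t y)"
proof -
  have "norm P \<le> 1 / \<beta> + c_g * max (r\<^sub>0 / \<beta>) 1" if PG: "P \<in> G t y" for P
  proof -
    obtain w s where 1: "0 \<le> s" "s * (L t y w + \<beta>) \<le> 1" "P = (s, s *\<^sub>R g t y w)"
      using G_memE2[OF t PG] by blast
    have pos: "L t y w + \<beta> > 0" by (rule Lb_pos[OF t])
    have sle: "s \<le> 1 / (L t y w + \<beta>)" using 1 pos by (simp add: field_simps)
    have "1 / (L t y w + \<beta>) \<le> 1 / \<beta>"
      using L_pos[OF t, where x=y and u=w] beta_pos by (intro divide_left_mono) auto
    then have "s \<le> 1 / \<beta>" using sle by linarith
    have "norm (s *\<^sub>R g t y w) = s * norm (g t y w)" using 1 by simp
    also have "\<dots> \<le> s * (c_g * norm w)"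
      using 1 gw_bound[OF t] by (intro mult_left_mono) auto
    also have "\<dots> = c_g * (s * norm w)" by simp
    also have "\<dots> \<le> c_g * max (r\<^sub>0 / \<beta>) 1"
      using sw_bound[OF t 1(1,2)] cg_nonneg by (intro mult_left_mono)
    finally have "norm (s *\<^sub>R g t y w) \<le> c_g * max (r\<^sub>0 / \<beta>) 1" .
    then show ?thesis using 1 \<open>s \<le> 1 / \<beta>\<close> norm_Pair_le[of s "s *\<^sub>R g t y w"] by simp
  qed
  then show ?thesis unfolding bounded_iff by blast
qed

lemma G_closed:
  assumes t: "t \<in> {0..1}"
  shows "closed (G t y)"
  unfolding closed_sequential_limits
proof (intro allI impI, elim conjE)
  fix P :: "nat \<Rightarrow> real \<times> (real^'n)" and l
  assume PG: "\<forall>n. P n \<in> G t y" and lim: "P \<longlonglongrightarrow> l"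
  have ex: "\<forall>n. \<exists>ws. 0 \<le> snd ws \<and> snd ws * (L t y (fst ws) + \<beta>) \<le> 1 \<and> P n = (snd ws, snd ws *\<^sub>R g t y (fst ws))"
  proof
    fix n
    obtain w s where "0 \<le> s" "s * (L t y w + \<beta>) \<le> 1" "P n = (s, s *\<^sub>R g t y w)"
      using G_memE2[OF t, of "P n" y] PG by blast
    then show "\<exists>ws. 0 \<le> snd ws \<and> snd ws * (L t y (fst ws) + \<beta>) \<le> 1 \<and> P n = (snd ws, snd ws *\<^sub>R g t y (fst ws))"
      by (intro exI[of _ "(w, s)"]) simp
  qed
  obtain f where f: "\<forall>n. 0 \<le> snd (f n) \<and> snd (f n) * (L t y (fst (f n)) + \<beta>) \<le> 1 \<and> P n = (snd (f n), snd (f n) *\<^sub>R g t y (fst (f n)))"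
    using choice[OF ex] by blast
  define w where "w = (\<lambda>n. fst (f n))"
  define s where "s = (\<lambda>n. snd (f n))"
  have ws: "\<And>n. 0 \<le> s n" "\<And>n. s n * (L t y (w n) + \<beta>) \<le> 1"
      "\<And>n. P n = (s n, s n *\<^sub>R g t y (w n))"
    using f unfolding w_def s_def by auto
  obtain s0 z0 where l: "l = (s0, z0)" by (cases l)
  have slim: "s \<longlonglongrightarrow> s0" using tendsto_fst[OF lim] unfolding l by (simp add: ws(3))
  have zlim: "(\<lambda>n. s n *\<^sub>R g t y (w n)) \<longlonglongrightarrow> z0" using tendsto_snd[OF lim] unfolding l by (simp add: ws(3))
  have s0nn: "s0 \<ge> 0" using slim ws(1) by (metis LIMSEQ_le_const)
  have pos: "\<And>u. L t y u + \<beta> > 0" by (rule Lb_pos[OF t])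
  show "l \<in> G t y"
  proof (cases "s0 > 0")
    case True
    have "eventually (\<lambda>n. s n > s0 / 2) sequentially"
      using slim True by (intro order_tendstoD(1)) auto
    then obtain N where N: "\<And>n. n \<ge> N \<Longrightarrow> s n > s0 / 2" by (auto simp: eventually_sequentially)
    define W where "W = max r\<^sub>0 (2 / s0)"
    have wb: "w n \<in> cball 0 W" if "n \<ge> N" for n
    proof -
      have "s0 / 2 * (L t y (w n) + \<beta>) \<le> s n * (L t y (w n) + \<beta>)"
        using N[OF that] pos[of "w n"] by (intro mult_right_mono) auto
      then have "s0 / 2 * (L t y (w n) + \<beta>) \<le> 1" using ws(2)[of n] by linarith
      then have "L t y (w n) + \<beta> \<le> 2 / s0" using True by (simp add: field_simps)
      then have Lle: "L t y (w n) \<le> 2 / s0" using beta_pos by linarith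
      show ?thesis
      proof (cases "norm (w n) \<ge> r\<^sub>0")
        case True
        then have "norm (w n) \<le> L t y (w n)" using r0[OF True] C1a[OF t, where x=y and u="w n"] by linarith
        then show ?thesis using Lle unfolding W_def by simp
      next
        case False then show ?thesis unfolding W_def by simp
      qed
    qed
    obtain w0 r where r: "w0 \<in> cball 0 W" "strict_mono r" "((\<lambda>k. w (k + N)) \<circ> r) \<longlonglongrightarrow> w0"
    proof -
      have wb': "\<forall>k. w (k + N) \<in> cball 0 W" using wb by simp
      show ?thesis using seq_compactE[OF compact_imp_seq_compact[OF compact_cball] wb'] that by blast
    qed
    define idx where "idx = (\<lambda>k. r k + N)"
    have idx: "strict_mono idx" using r(2) unfolding idx_def strict_mono_def by simp
    have wl: "(w \<circ> idx) \<longlonglongrightarrow> w0" using r(3) unfolding idx_def o_def .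
    have sl: "(s \<circ> idx) \<longlonglongrightarrow> s0" by (rule LIMSEQ_subseq_LIMSEQ[OF slim idx])
    have zl: "((\<lambda>n. s n *\<^sub>R g t y (w n)) \<circ> idx) \<longlonglongrightarrow> z0" by (rule LIMSEQ_subseq_LIMSEQ[OF zlim idx])
    have Ll: "(\<lambda>k. L t y (w (idx k))) \<longlonglongrightarrow> L t y w0"
      using continuous_on_tendsto_compose[OF Lw_cont[OF t, of y] wl[unfolded o_def]] by simp
    have zl2: "((\<lambda>n. s n *\<^sub>R g t y (w n)) \<circ> idx) \<longlonglongrightarrow> s0 *\<^sub>R g t y w0"
    proof -
      have a: "(\<lambda>k. s (idx k)) \<longlonglongrightarrow> s0" using sl by (simp add: o_def)
      have b: "(\<lambda>k. g t y (w (idx k))) \<longlonglongrightarrow> g t y w0"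
        using blinfun.tendsto[OF tendsto_const wl[unfolded o_def], of "g t y"] .
      show ?thesis using tendsto_scaleR[OF a b] by (simp add: o_def)
    qed
    have z0: "z0 = s0 *\<^sub>R g t y w0" using LIMSEQ_unique[OF zl zl2] .
    have "(\<lambda>k. s (idx k) * (L t y (w (idx k)) + \<beta>)) \<longlonglongrightarrow> s0 * (L t y w0 + \<beta>)"
    proof -
      have a: "(\<lambda>k. s (idx k)) \<longlonglongrightarrow> s0" using sl by (simp add: o_def)
      show ?thesis by (rule tendsto_mult[OF a tendsto_add[OF Ll tendsto_const]])
    qed
    then have "s0 * (L t y w0 + \<beta>) \<le> 1" using LIMSEQ_le_const2 ws(2) by blast
    from G_mem2[OF t s0nn this] show ?thesis unfolding l z0 .
  next
    case False
    then have s00: "s0 = 0" using s0nn by simp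
    have sw: "(\<lambda>n. s n * norm (w n)) \<longlonglongrightarrow> 0"
    proof (rule order_tendstoI)
      fix a :: real assume "a < 0"
      then show "eventually (\<lambda>n. a < s n * norm (w n)) sequentially"
        using ws(1) by (auto intro!: always_eventually) (smt (verit) mult_nonneg_nonneg norm_ge_zero)
    next
      fix a :: real assume a: "0 < a"
      have "eventually (\<lambda>r. r / \<theta> r < a) at_top"
        using C1b a by (intro order_tendstoD(2)) auto
      then obtain R where R: "\<And>r. r \<ge> R \<Longrightarrow> r / \<theta> r < a"
        unfolding eventually_at_top_linorder by blast
      define R' where "R' = max R r\<^sub>0"
      have R'pos: "R' > 0" unfolding R'_def using r0_pos by simp
      have "eventually (\<lambda>n. s n < a / R') sequentially"
        using slim a R'pos unfolding s00 by (intro order_tendstoD(2)) auto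
      then show "eventually (\<lambda>n. s n * norm (w n) < a) sequentially"
      proof (rule eventually_mono)
        fix n assume sn: "s n < a / R'"
        show "s n * norm (w n) < a"
        proof (cases "norm (w n) \<ge> R'")
          case True
          have th: "\<theta> (norm (w n)) > 0" using C1a[OF t, where x=y and u="w n"] by simp
          have "s n * norm (w n) \<le> norm (w n) / (L t y (w n) + \<beta>)"
            using mult_right_mono[OF _ norm_ge_zero[of "w n"], of "s n" "1 / (L t y (w n) + \<beta>)"]
              ws(1,2)[of n] pos[of "w n"] by (simp add: field_simps)
          also have "\<dots> \<le> norm (w n) / \<theta> (norm (w n))"
            using C1a[OF t, where x=y and u="w n"] th beta_pos
            by (intro divide_left_mono) auto
          also have "\<dots> < a" using R[of "norm (w n)"] True th unfolding R'_def by simp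
          finally show ?thesis .
        next
          case False
          have "s n * norm (w n) \<le> s n * R'" using False ws(1)[of n] by (intro mult_left_mono) auto
          also have "\<dots> < a" using sn R'pos by (simp add: field_simps)
          finally show ?thesis .
        qed
      qed
    qed
    have "(\<lambda>n. s n *\<^sub>R g t y (w n)) \<longlonglongrightarrow> 0"
    proof (rule Lim_null_comparison)
      show "eventually (\<lambda>n. norm (s n *\<^sub>R g t y (w n)) \<le> c_g * (s n * norm (w n))) sequentially"
      proof (intro always_eventually allI)
        fix n
        have "s n * norm (g t y (w n)) \<le> s n * (c_g * norm (w n))"
          using ws(1)[of n] gw_bound[OF t, of y "w n"] by (rule mult_left_mono[rotated])
        then show "norm (s n *\<^sub>R g t y (w n)) \<le> c_g * (s n * norm (w n))"
          using ws(1)[of n] by (simp add: algebra_simps)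
      qed
      show "(\<lambda>n. c_g * (s n * norm (w n))) \<longlonglongrightarrow> 0" using tendsto_mult_right_zero[OF sw] .
    qed
    then have "z0 = 0" using LIMSEQ_unique zlim by blast
    then show ?thesis unfolding l s00 using G_zero[OF t] by simp
  qed
qed

lemma G_compact: "t \<in> {0..1} \<Longrightarrow> compact (G t y)"
  using G_closed G_bounded compact_eq_bounded_closed by blast

abbreviation "S0 \<equiv> ({0..(1::real)} \<times> (UNIV :: (real^'n) set))"

lemma S0_convex: "convex S0" by (intro convex_Times convex_real_interval) auto

lemma L_der:
  assumes z: "z \<in> S0"
  shows "((\<lambda>z. L (fst z) (snd z) w) has_derivative (\<lambda>h. L' (fst z, snd z, w) (fst h, snd h, 0))) (at z within S0)"
proof -
  have e: "((\<lambda>z. (fst z, snd z, w)) has_derivative (\<lambda>h. (fst h, snd h, 0))) (at z within S0)"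
    by (auto intro!: derivative_eq_intros)
  have "((\<lambda>z. (\<lambda>(t, x, u). L t x u) ((\<lambda>z. (fst z, snd z, w)) z)) has_derivative
          (\<lambda>h. L' ((\<lambda>z. (fst z, snd z, w)) z) ((\<lambda>h. (fst h, snd h, 0)) h))) (at z within S0)"
    by (rule has_derivative_in_compose2[OF _ _ z e, where t="{0..1} \<times> UNIV \<times> UNIV"])
       (use L_C1 in \<open>auto simp: C1_on_def\<close>)
  then show ?thesis by simp
qed

lemma g_der:
  assumes z: "z \<in> S0"
  shows "((\<lambda>z. g (fst z) (snd z)) has_derivative g' z) (at z within S0)"
proof -
  have "((\<lambda>(t, x). g t x) has_derivative g' z) (at z within S0)" using g_C1 z by (cases z) (simp add: C1_on_def)
  moreover have "(\<lambda>(t, x). g t x) = (\<lambda>z. g (fst z) (snd z))" by (simp add: split_beta')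
  ultimately show ?thesis by simp
qed

lemma g_lip:
  assumes p: "p \<in> S0" and q: "q \<in> S0"
  shows "norm (g (fst p) (snd p) w - g (fst q) (snd q) w) \<le> c_dg * dist p q * norm w"
proof -
  have "norm (g (fst p) (snd p) - g (fst q) (snd q)) \<le> c_dg * norm (p - q)"
  proof (rule differentiable_bound[OF S0_convex g_der _ p q])
    fix z assume "z \<in> S0"
    then show "onorm (blinfun_apply (g' z)) \<le> c_dg" using C4[of "fst z" "snd z"]
      by (auto simp: norm_blinfun.rep_eq[symmetric] mem_Times_iff)
  qed
  then have "norm ((g (fst p) (snd p) - g (fst q) (snd q)) w) \<le> c_dg * norm (p - q) * norm w"
    by (metis norm_blinfun mult_right_mono norm_ge_zero order_trans)
  then show ?thesis by (simp add: blinfun.diff_left dist_norm)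
qed

lemma Lpart_bound:
  "norm (L' (t, x, u) (fst h, snd h, 0)) \<le> onorm (\<lambda>(s, y). L' (t, x, u) (s, y, 0)) * norm h"
proof -
  have bl: "bounded_linear (\<lambda>h::real \<times> (real^'n). ((fst h, snd h, 0) :: real \<times> (real^'n) \<times> (real^'m)))"
    by (intro bounded_linear_Pair bounded_linear_fst bounded_linear_snd bounded_linear_zero bounded_linear_ident)
  have eq: "(\<lambda>(s, y). L' (t, x, u) (s, y, 0)) = (\<lambda>h. L' (t, x, u) ((\<lambda>h. (fst h, snd h, 0)) h))"
    by (simp add: split_beta')
  have "bounded_linear (\<lambda>(s, y). L' (t, x, u) (s, y, 0))"
    unfolding eq by (rule bounded_linear_blinfun_apply[OF bl])
  from onorm[OF this, of h] show ?thesis by (simp add: split_beta')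
qed

definition "C1c = c_dg * max (r\<^sub>0 / \<beta>) 1 + max \<xi> (\<delta> / \<beta>) / \<beta>"

lemma V_lip:
  assumes p: "p \<in> S0" and q: "q \<in> S0"
  shows "norm (inverse (L (fst p) (snd p) w + \<beta>) *\<^sub>R g (fst p) (snd p) w
              - inverse (L (fst q) (snd q) w + \<beta>) *\<^sub>R g (fst q) (snd q) w) \<le> C1c * norm (p - q)"
proof (rule differentiable_bound[OF S0_convex _ _ p q])
  fix z assume z: "z \<in> S0"
  have t: "fst z \<in> {0..1}" using z by (auto simp: mem_Times_iff)
  define Lz where "Lz = L (fst z) (snd z) w + \<beta>"
  have Lzp: "Lz > 0" unfolding Lz_def by (rule Lb_pos[OF t])
  have d1: "((\<lambda>z. inverse (L (fst z) (snd z) w + \<beta>)) has_derivative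
      (\<lambda>h. - (inverse Lz * L' (fst z, snd z, w) (fst h, snd h, 0) * inverse Lz))) (at z within S0)"
    using Deriv.has_derivative_inverse[OF _ has_derivative_add_const[OF L_der[OF z, of w], of \<beta>]] Lzp
    unfolding Lz_def by simp
  have d2: "((\<lambda>z. g (fst z) (snd z) w) has_derivative (\<lambda>h. g' z h w)) (at z within S0)"
    using blinfun.FDERIV[OF g_der[OF z] has_derivative_const[of w]] by simp
  show "((\<lambda>z. inverse (L (fst z) (snd z) w + \<beta>) *\<^sub>R g (fst z) (snd z) w) has_derivative
      (\<lambda>h. inverse Lz *\<^sub>R g' z h w + (- (inverse Lz * L' (fst z, snd z, w) (fst h, snd h, 0) * inverse Lz)) *\<^sub>R g (fst z) (snd z) w))
      (at z within S0)"
    using has_derivative_scaleR[OF d1 d2] unfolding Lz_def by simp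
  show "onorm (\<lambda>h. inverse Lz *\<^sub>R g' z h w + (- (inverse Lz * L' (fst z, snd z, w) (fst h, snd h, 0) * inverse Lz)) *\<^sub>R g (fst z) (snd z) w) \<le> C1c"
  proof (rule onorm_le)
    fix h :: "real \<times> (real^'n)"
    define A where "A = onorm (\<lambda>(s, y). L' (fst z, snd z, w) (s, y, 0))"
    define m where "m = max \<xi> (\<delta> / \<beta>)"
    have "norm (inverse Lz *\<^sub>R g' z h w) = inverse Lz * norm (g' z h w)" using Lzp by simp
    also have "\<dots> \<le> inverse Lz * (c_dg * norm h * norm w)"
    proof (intro mult_left_mono)
      have "norm (g' z h w) \<le> norm (g' z h) * norm w" by (rule norm_blinfun)
      also have "\<dots> \<le> (norm (g' z) * norm h) * norm w" by (intro mult_right_mono norm_blinfun) auto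
      also have "\<dots> \<le> (c_dg * norm h) * norm w" using C4[OF t, of "snd z"]
        by (intro mult_right_mono) auto
      finally show "norm (g' z h w) \<le> c_dg * norm h * norm w" .
    qed (use Lzp in auto)
    also have "\<dots> = (c_dg * norm h) * (norm w / Lz)" by (simp add: field_simps)
    also have "\<dots> \<le> (c_dg * norm h) * max (r\<^sub>0 / \<beta>) 1"
    proof (intro mult_left_mono)
      show "norm w / Lz \<le> max (r\<^sub>0 / \<beta>) 1" unfolding Lz_def by (rule w_bound[OF t])
      show "0 \<le> c_dg * norm h" using cdg_nonneg by simp
    qed
    finally have T1: "norm (inverse Lz *\<^sub>R g' z h w) \<le> c_dg * max (r\<^sub>0 / \<beta>) 1 * norm h" by (simp add: ac_simps)
    have "norm ((- (inverse Lz * L' (fst z, snd z, w) (fst h, snd h, 0) * inverse Lz)) *\<^sub>R g (fst z) (snd z) w)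
        = norm (L' (fst z, snd z, w) (fst h, snd h, 0)) * norm (g (fst z) (snd z) w) / Lz^2"
      using Lzp by (simp add: power2_eq_square field_simps abs_mult)
    also have "\<dots> \<le> (A * norm h) * norm (g (fst z) (snd z) w) / Lz^2"
      using Lpart_bound[of "fst z" "snd z" w h] Lzp unfolding A_def
      by (intro divide_right_mono mult_right_mono) auto
    also have "\<dots> = (A * norm (g (fst z) (snd z) w)) * norm h / Lz^2" by simp
    also have "\<dots> \<le> (\<xi> * L (fst z) (snd z) w + \<delta>) * norm h / Lz^2"
      using C3[OF t, of "snd z" w] unfolding A_def
      by (intro divide_right_mono mult_right_mono) auto
    also have "\<dots> \<le> (m * Lz) * norm h / Lz^2"
    proof (intro divide_right_mono mult_right_mono)
      have "\<xi> * L (fst z) (snd z) w \<le> m * L (fst z) (snd z) w"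
        using L_pos[OF t, of "snd z" w] unfolding m_def by (intro mult_right_mono) auto
      moreover have "\<delta> \<le> m * \<beta>" unfolding m_def using beta_pos
        by (smt (verit, best) divide_le_eq max.cobounded2 mult.commute)
      ultimately show "\<xi> * L (fst z) (snd z) w + \<delta> \<le> m * Lz" unfolding Lz_def by (simp add: algebra_simps)
    qed auto
    also have "\<dots> = (m / Lz) * norm h" using Lzp by (simp add: power2_eq_square field_simps)
    also have "\<dots> \<le> (m / \<beta>) * norm h"
    proof (intro mult_right_mono divide_left_mono)
      show "\<beta> \<le> Lz" unfolding Lz_def using L_pos[OF t, of "snd z" w] by simp
      show "0 \<le> m" unfolding m_def using xi_pos by simp
    qed (use beta_pos Lzp in auto)
    finally have T2: "norm ((- (inverse Lz * L' (fst z, snd z, w) (fst h, snd h, 0) * inverse Lz)) *\<^sub>R g (fst z) (snd z) w)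
       \<le> (m / \<beta>) * norm h" .
    show "norm (inverse Lz *\<^sub>R g' z h w + (- (inverse Lz * L' (fst z, snd z, w) (fst h, snd h, 0) * inverse Lz)) *\<^sub>R g (fst z) (snd z) w) \<le> C1c * norm h"
      using norm_triangle_le[OF add_mono[OF T1 T2]] unfolding C1c_def m_def by (simp add: algebra_simps)
  qed
qed

lemma KR_compact: "compact ({0..(1::real)} \<times> cball (0::real^'n) R \<times> cball (0::real^'m) W)"
  by (intro compact_Times compact_Icc compact_cball)

lemma KR_sub: "{0..(1::real)} \<times> cball (0::real^'n) R \<times> cball (0::real^'m) W \<subseteq> {0..1} \<times> UNIV \<times> UNIV"
  by auto

lemma L'_bounded: "\<exists>M. \<forall>t x u. t \<in> {0..1} \<and> norm x \<le> R \<and> norm u \<le> W \<longrightarrow> norm (L' (t, x, u)) \<le> M"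
proof -
  have "continuous_on ({0..(1::real)} \<times> cball (0::real^'n) R \<times> cball (0::real^'m) W) L'"
    using L_C1 KR_sub continuous_on_subset unfolding C1_on_def by blast
  then have "bounded (L' ` ({0..(1::real)} \<times> cball (0::real^'n) R \<times> cball (0::real^'m) W))"
    using compact_continuous_image[OF _ KR_compact] compact_imp_bounded by blast
  then obtain M where "\<forall>y \<in> L' ` ({0..(1::real)} \<times> cball (0::real^'n) R \<times> cball (0::real^'m) W). norm y \<le> M"
    unfolding bounded_iff by blast
  then have "\<forall>t x u. t \<in> {0..1} \<and> norm x \<le> R \<and> norm u \<le> W \<longrightarrow> norm (L' (t, x, u)) \<le> M"
    by (auto simp del: atLeastAtMost_iff)
  then show ?thesis by blast
qed

lemma L_bounded: "\<exists>M. \<forall>t x u. t \<in> {0..1} \<and> norm x \<le> R \<and> norm u \<le> W \<longrightarrow> L t x u \<le> M"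
proof -
  have "continuous_on ({0..(1::real)} \<times> cball (0::real^'n) R \<times> cball (0::real^'m) W) (\<lambda>(t, x, u). L t x u)"
    using L_cont KR_sub continuous_on_subset by blast
  then have "bounded ((\<lambda>(t, x, u). L t x u) ` ({0..(1::real)} \<times> cball (0::real^'n) R \<times> cball (0::real^'m) W))"
    using compact_continuous_image[OF _ KR_compact] compact_imp_bounded by blast
  then obtain M where "\<forall>y \<in> (\<lambda>(t, x, u). L t x u) ` ({0..(1::real)} \<times> cball (0::real^'n) R \<times> cball (0::real^'m) W). norm y \<le> M"
    unfolding bounded_iff by blast
  then have "\<forall>t x u. t \<in> {0..1} \<and> norm x \<le> R \<and> norm u \<le> W \<longrightarrow> norm (L t x u) \<le> M" by force
  then have "\<forall>t x u. t \<in> {0..1} \<and> norm x \<le> R \<and> norm u \<le> W \<longrightarrow> L t x u \<le> M"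
    by (metis abs_le_D1 real_norm_def)
  then show ?thesis by blast
qed

lemma L_lip:
  assumes M: "\<forall>t x u. t \<in> {0..1} \<and> norm x \<le> R \<and> norm u \<le> W \<longrightarrow> norm (L' (t, x, u)) \<le> M"
    and p: "p \<in> {0..1} \<times> cball 0 R" and q: "q \<in> {0..1} \<times> cball 0 R" and w: "norm w \<le> W"
  shows "norm (L (fst p) (snd p) w - L (fst q) (snd q) w) \<le> M * norm (p - q)"
proof (rule differentiable_bound[OF _ _ _ p q])
  show "convex ({0..(1::real)} \<times> cball (0::real^'n) R)" by (intro convex_Times convex_cball) auto
  fix z assume z: "z \<in> {0..(1::real)} \<times> cball (0::real^'n) R"
  then have z0: "z \<in> S0" by (auto simp: mem_Times_iff)
  show "((\<lambda>z. L (fst z) (snd z) w) has_derivative (\<lambda>h. L' (fst z, snd z, w) (fst h, snd h, 0))) (at z within {0..1} \<times> cball 0 R)"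
    by (rule has_derivative_subset[OF L_der[OF z0]]) auto
  show "onorm (\<lambda>h. L' (fst z, snd z, w) (fst h, snd h, 0)) \<le> M"
  proof (rule onorm_le)
    fix h :: "real \<times> (real^'n)"
    have "norm (L' (fst z, snd z, w) (fst h, snd h, 0)) \<le> norm (L' (fst z, snd z, w)) * norm (fst h, snd h, 0::real^'m)"
      by (rule norm_blinfun)
    also have "norm (fst h, snd h, 0::real^'m) = norm h" by (cases h) (simp add: norm_Pair)
    also have "norm (L' (fst z, snd z, w)) * norm h \<le> M * norm h"
      using M z w by (intro mult_right_mono) (auto simp: mem_Times_iff)
    finally show "norm (L' (fst z, snd z, w) (fst h, snd h, 0)) \<le> M * norm h" .
  qed
qed

lemma dist_pair_le: "dist (a::real, y) (b, z) \<le> \<bar>a - b\<bar> + norm (y - z)"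
  using norm_Pair_le[of "a - b" "y - z"] by (simp add: dist_norm)

lemma C1c_nonneg: "C1c \<ge> 0"
  unfolding C1c_def using cdg_nonneg beta_pos xi_pos by (intro add_nonneg_nonneg mult_nonneg_nonneg divide_nonneg_pos) auto

lemma G_lip_pt:
  "\<exists>K. \<forall>p\<in>{0..(1::real)} \<times> cball (0::real^'n) R. \<forall>q\<in>{0..(1::real)} \<times> cball (0::real^'n) R. \<forall>P\<in>G (fst p) (snd p).
      infdist P (G (fst q) (snd q)) \<le> K * dist p q"
proof -
  obtain M0 where M0: "\<forall>t x u. t \<in> {0..1} \<and> norm x \<le> R \<and> norm u \<le> 0 \<longrightarrow> L t x u \<le> M0"
    using L_bounded[of R 0] by blast
  define W where "W = max r\<^sub>0 (2 * (M0 + \<beta>))"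
  obtain MW where MW: "\<forall>t x u. t \<in> {0..1} \<and> norm x \<le> R \<and> norm u \<le> W \<longrightarrow> norm (L' (t, x, u)) \<le> MW"
    using L'_bounded[of R W] by blast
  define Wc where "Wc = max (r\<^sub>0 / \<beta>) 1"
  define MW' where "MW' = max MW 0"
  define K where "K = 2 * C1c + c_dg * Wc + MW' / \<beta>^2"
  have Wc0: "Wc \<ge> 0" unfolding Wc_def by simp
  have MW'0: "MW' \<ge> 0" unfolding MW'_def by simp
  show ?thesis
  proof (intro exI ballI)
    fix p q :: "real \<times> (real^'n)" and P
    assume p: "p \<in> {0..1} \<times> cball 0 R" and q: "q \<in> {0..1} \<times> cball 0 R" and P: "P \<in> G (fst p) (snd p)"
    have pS0: "p \<in> S0" and qS0: "q \<in> S0" using p q by (auto simp: mem_Times_iff)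
    have tp: "fst p \<in> {0..1}" and tq: "fst q \<in> {0..1}" using p q by (auto simp: mem_Times_iff)
    have nq: "norm (snd q) \<le> R" using q by (auto simp: mem_Times_iff)
    define d where "d = dist p q"
    have d0: "d \<ge> 0" unfolding d_def by simp
    obtain w \<rho> where \<rho>: "\<rho> \<in> {0..1}"
      and Pw: "P = (\<rho> / (L (fst p) (snd p) w + \<beta>), (\<rho> / (L (fst p) (snd p) w + \<beta>)) *\<^sub>R g (fst p) (snd p) w)"
      using G_memE[OF P] by blast
    define Lp where "Lp = L (fst p) (snd p) w + \<beta>"
    define Lq where "Lq = L (fst q) (snd q) w + \<beta>"
    define Lq0 where "Lq0 = L (fst q) (snd q) 0 + \<beta>"
    define S where "S = inverse Lp"
    define a where "a = inverse Lq"
    define b where "b = inverse Lq0"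
    define gp where "gp = g (fst p) (snd p) w"
    define gq where "gq = g (fst q) (snd q) w"
    have Lpb: "Lp \<ge> \<beta>" unfolding Lp_def using L_pos[OF tp, of "snd p" w] by simp
    have Lqb: "Lq \<ge> \<beta>" unfolding Lq_def using L_pos[OF tq, of "snd q" w] by simp
    have Lq0b: "Lq0 \<ge> \<beta>" unfolding Lq0_def using L_pos[OF tq, of "snd q" 0] by simp
    have Lp0: "Lp > 0" and Lq0': "Lq > 0" and Lq00: "Lq0 > 0" using Lpb Lqb Lq0b beta_pos by auto
    have S0': "S > 0" and a0: "a > 0" and b0: "b > 0" unfolding S_def a_def b_def using Lp0 Lq0' Lq00 by auto
    have Pe: "P = (\<rho> * S, (\<rho> * S) *\<^sub>R gp)" unfolding Pw S_def gp_def Lp_def by (simp add: divide_inverse)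
    have V: "norm (S *\<^sub>R gp - a *\<^sub>R gq) \<le> C1c * d"
      using V_lip[OF pS0 qS0, of w] unfolding S_def a_def gp_def gq_def Lp_def Lq_def d_def dist_norm .
    have gl: "norm (gp - gq) \<le> c_dg * d * norm w"
      using g_lip[OF pS0 qS0, of w] unfolding gp_def gq_def d_def .
    have sw: "S * norm w \<le> Wc"
      using w_bound[OF tp, of w "snd p"] unfolding S_def Lp_def Wc_def by (simp add: divide_inverse ac_simps)
    have \<rho>01: "0 \<le> \<rho>" "\<rho> \<le> 1" using \<rho> by auto
    have Sgl: "S * norm (gp - gq) \<le> c_dg * Wc * d"
    proof -
      have "S * norm (gp - gq) \<le> S * (c_dg * d * norm w)" using gl S0' by (intro mult_left_mono) auto
      also have "\<dots> = (c_dg * d) * (S * norm w)" by simp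
      also have "\<dots> \<le> (c_dg * d) * Wc" using sw cdg_nonneg d0 by (intro mult_left_mono) auto
      finally show ?thesis by (simp add: ac_simps)
    qed
    have ex: "\<exists>Q\<in>G (fst q) (snd q). dist P Q \<le> K * d"
    proof (cases "S \<le> a")
      case True
      define Q where "Q = (\<rho> * S, (\<rho> * S) *\<^sub>R gq)"
      have "(\<rho> * S) * (L (fst q) (snd q) w + \<beta>) \<le> 1"
      proof -
        have "(\<rho> * S) * Lq \<le> (1 * a) * Lq" using True \<rho>01 S0' Lq0'
          by (intro mult_right_mono mult_mono) auto
        also have "\<dots> = 1" unfolding a_def using Lq0' by simp
        finally show ?thesis unfolding Lq_def .
      qed
      then have QG: "Q \<in> G (fst q) (snd q)" unfolding Q_def gq_def
        by (intro G_mem2[OF tq]) (use \<rho>01 S0' in auto)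
      have "dist P Q \<le> \<bar>\<rho> * S - \<rho> * S\<bar> + norm ((\<rho> * S) *\<^sub>R gp - (\<rho> * S) *\<^sub>R gq)"
        unfolding Pe Q_def by (rule dist_pair_le)
      also have "\<dots> = \<rho> * (S * norm (gp - gq))"
        using \<rho>01 S0' by (simp add: scaleR_diff_right[symmetric])
      also have "\<dots> \<le> 1 * (c_dg * Wc * d)" by (rule mult_mono) (use Sgl \<rho>01 S0' in auto)
      also have "\<dots> \<le> K * d" unfolding K_def using C1c_nonneg MW'0 d0 beta_pos
        by (simp add: algebra_simps)
      finally show ?thesis using QG by blast
    next
      case False
      then have aS: "a < S" by simp
      show ?thesis
      proof (cases "S \<le> b / 2")
        case True
        define \<mu> where "\<mu> = (b - S) / (b - a)"
        have ba: "b - a > 0" using aS True S0' by simp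
        have \<mu>01: "0 \<le> \<mu>" "\<mu> \<le> 1" unfolding \<mu>_def using ba aS True S0' by (auto simp: field_simps)
        have Y: "(a, a *\<^sub>R gq) \<in> G (fst q) (snd q)" unfolding gq_def
          by (intro G_mem2[OF tq]) (use a0 Lq0' in \<open>auto simp: a_def Lq_def[symmetric]\<close>)
        have Z: "(b, 0) \<in> G (fst q) (snd q)"
          using G_mem2[OF tq, of b "snd q" 0] b0 Lq00 unfolding b_def Lq0_def by simp
        have X: "\<mu> *\<^sub>R (a, a *\<^sub>R gq) + (1 - \<mu>) *\<^sub>R (b, 0) \<in> G (fst q) (snd q)"
          using convexD[OF G_convex[OF tq] Y Z] \<mu>01 by simp
        have Q: "\<rho> *\<^sub>R (\<mu> *\<^sub>R (a, a *\<^sub>R gq) + (1 - \<mu>) *\<^sub>R (b, 0)) + (1 - \<rho>) *\<^sub>R (0, 0) \<in> G (fst q) (snd q)"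
          using convexD[OF G_convex[OF tq] X G_zero[OF tq], of \<rho> "1 - \<rho>"] \<rho>01 by simp
        have fstX: "\<mu> * a + (1 - \<mu>) * b = S"
        proof -
          have "\<mu> * (b - a) = b - S" unfolding \<mu>_def using ba by simp
          moreover have "\<mu> * a + (1 - \<mu>) * b = b - \<mu> * (b - a)" by (simp add: algebra_simps)
          ultimately show ?thesis by simp
        qed
        have Qe: "\<rho> *\<^sub>R (\<mu> *\<^sub>R (a, a *\<^sub>R gq) + (1 - \<mu>) *\<^sub>R (b, 0)) + (1 - \<rho>) *\<^sub>R (0, 0)
            = (\<rho> * S, (\<rho> * (\<mu> * a)) *\<^sub>R gq)"
          by (simp add: fstX)
        have key: "(S - a) * norm gq \<le> c_dg * Wc * d + C1c * d"
        proof -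
          have "(S - a) * norm gq = norm (S *\<^sub>R gq - a *\<^sub>R gq)" using aS
            by (simp add: scaleR_diff_left[symmetric])
          also have "\<dots> \<le> norm (S *\<^sub>R gq - S *\<^sub>R gp) + norm (S *\<^sub>R gp - a *\<^sub>R gq)"
            by (rule norm_diff_triangle_le[of _ "S *\<^sub>R gp"]) simp_all
          also have "norm (S *\<^sub>R gq - S *\<^sub>R gp) = S * norm (gp - gq)" using S0'
            by (simp add: scaleR_diff_right[symmetric] norm_minus_commute)
          finally show ?thesis using Sgl V by linarith
        qed
        have "dist P (\<rho> * S, (\<rho> * (\<mu> * a)) *\<^sub>R gq) \<le> \<bar>\<rho> * S - \<rho> * S\<bar> + norm ((\<rho> * S) *\<^sub>R gp - (\<rho> * (\<mu> * a)) *\<^sub>R gq)"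
          unfolding Pe by (rule dist_pair_le)
        also have "\<dots> = \<rho> * norm (S *\<^sub>R gp - (\<mu> * a) *\<^sub>R gq)"
        proof -
          have "(\<rho> * S) *\<^sub>R gp - (\<rho> * (\<mu> * a)) *\<^sub>R gq = \<rho> *\<^sub>R (S *\<^sub>R gp - (\<mu> * a) *\<^sub>R gq)"
            by (simp add: scaleR_diff_right)
          then show ?thesis using \<rho>01 by simp
        qed
        also have "\<dots> \<le> 1 * norm (S *\<^sub>R gp - (\<mu> * a) *\<^sub>R gq)" using \<rho>01 by (intro mult_right_mono) auto
        also have "S *\<^sub>R gp - (\<mu> * a) *\<^sub>R gq = (S *\<^sub>R gp - a *\<^sub>R gq) + ((1 - \<mu>) * a) *\<^sub>R gq"
          by (simp add: algebra_simps)
        also have "1 * norm \<dots> \<le> norm (S *\<^sub>R gp - a *\<^sub>R gq) + norm (((1 - \<mu>) * a) *\<^sub>R gq)"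
          using norm_triangle_ineq[of "S *\<^sub>R gp - a *\<^sub>R gq" "((1 - \<mu>) * a) *\<^sub>R gq"] by (simp only: mult_1_left)
        finally have D1: "dist P (\<rho> * S, (\<rho> * (\<mu> * a)) *\<^sub>R gq) \<le> norm (S *\<^sub>R gp - a *\<^sub>R gq) + norm (((1 - \<mu>) * a) *\<^sub>R gq)" .
        have "norm (((1 - \<mu>) * a) *\<^sub>R gq) = ((S - a) * norm gq) * (a / (b - a))"
        proof -
          have "1 - \<mu> = (S - a) / (b - a)" unfolding \<mu>_def using ba by (simp add: field_simps)
          then show ?thesis using \<mu>01 a0 ba aS by (simp add: abs_mult)
        qed
        also have "((S - a) * norm gq) * (a / (b - a)) \<le> (c_dg * Wc * d + C1c * d) * 1"
        proof (rule mult_mono[OF key])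
          show "a / (b - a) \<le> 1" using ba aS True by (simp add: field_simps)
          show "0 \<le> c_dg * Wc * d + C1c * d" using cdg_nonneg Wc0 d0 C1c_nonneg by simp
        qed (use aS a0 ba in auto)
        finally have "dist P (\<rho> * S, (\<rho> * (\<mu> * a)) *\<^sub>R gq) \<le> C1c * d + (c_dg * Wc * d + C1c * d)"
          using V D1 by (smt (verit) mult_1_right)
        also have "\<dots> \<le> K * d" unfolding K_def using MW'0 d0 beta_pos
          by (simp add: algebra_simps)
        finally show ?thesis using Q Qe by auto
      next
        case False
        then have Sb: "S > b / 2" by simp
        have Lw: "norm w \<le> W"
        proof -
          have "Lp < 2 * Lq0" using Sb S0' b0 unfolding S_def b_def
            by (simp add: field_simps)
          moreover have "Lq0 \<le> M0 + \<beta>" unfolding Lq0_def using M0 tq nq by simp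
          ultimately have "L (fst p) (snd p) w < 2 * (M0 + \<beta>)" unfolding Lp_def using beta_pos by (simp add: algebra_simps)
          then show ?thesis
          proof (cases "norm w \<ge> r\<^sub>0")
            case True
            then have "norm w \<le> L (fst p) (snd p) w" using r0[OF True] C1a[OF tp, where x="snd p" and u=w] by linarith
            then show ?thesis using \<open>L (fst p) (snd p) w < 2 * (M0 + \<beta>)\<close> unfolding W_def by linarith
          next
            case False then show ?thesis unfolding W_def by simp
          qed
        qed
        define Q where "Q = (\<rho> * a, (\<rho> * a) *\<^sub>R gq)"
        have QG: "Q \<in> G (fst q) (snd q)" unfolding Q_def gq_def
          by (intro G_mem2[OF tq]) (use \<rho>01 a0 Lq0' in \<open>auto simp: a_def Lq_def[symmetric] mult.assoc\<close>)
        have Ll: "norm (L (fst p) (snd p) w - L (fst q) (snd q) w) \<le> MW * d"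
          using L_lip[OF MW p q Lw] unfolding d_def dist_norm .
        have Sa: "S - a = S * a * (Lq - Lp)" unfolding S_def a_def using Lp0 Lq0' by (simp add: field_simps)
        have "S - a \<le> (1 / \<beta>) * (1 / \<beta>) * (MW' * d)"
        proof -
          have "S - a \<le> S * a * \<bar>Lq - Lp\<bar>" unfolding Sa using S0' a0 by (intro mult_left_mono) auto
          also have "\<dots> \<le> (1 / \<beta>) * (1 / \<beta>) * (MW' * d)"
          proof (intro mult_mono)
            show "S \<le> 1 / \<beta>" unfolding S_def using Lpb beta_pos by (simp add: field_simps)
            show "a \<le> 1 / \<beta>" unfolding a_def using Lqb beta_pos by (simp add: field_simps)
            show "\<bar>Lq - Lp\<bar> \<le> MW' * d" using Ll d0 unfolding Lq_def Lp_def MW'_def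
              by (smt (verit, best) max.cobounded1 mult_right_mono real_norm_def)
          qed (use beta_pos S0' a0 in auto)
          finally show ?thesis .
        qed
        then have Sa2: "S - a \<le> MW' / \<beta>^2 * d" by (simp add: power2_eq_square)
        have "dist P Q \<le> \<bar>\<rho> * S - \<rho> * a\<bar> + norm ((\<rho> * S) *\<^sub>R gp - (\<rho> * a) *\<^sub>R gq)"
          unfolding Pe Q_def by (rule dist_pair_le)
        also have "\<dots> = \<rho> * (S - a) + \<rho> * norm (S *\<^sub>R gp - a *\<^sub>R gq)"
        proof -
          have "(\<rho> * S) *\<^sub>R gp - (\<rho> * a) *\<^sub>R gq = \<rho> *\<^sub>R (S *\<^sub>R gp - a *\<^sub>R gq)"
            by (simp add: scaleR_diff_right)
          moreover have "\<bar>\<rho> * S - \<rho> * a\<bar> = \<rho> * (S - a)"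
            using \<rho>01 aS by (simp add: right_diff_distrib[symmetric] abs_mult)
          ultimately show ?thesis using \<rho>01 by simp
        qed
        also have "\<dots> \<le> 1 * (MW' / \<beta>^2 * d) + 1 * (C1c * d)"
          by (rule add_mono; rule mult_mono) (use \<rho>01 aS Sa2 V in auto)
        also have "\<dots> \<le> K * d" unfolding K_def using d0 C1c_nonneg cdg_nonneg Wc0
          by (simp add: algebra_simps)
        finally show ?thesis using QG by blast
      qed
    qed
    then show "infdist P (G (fst q) (snd q)) \<le> K * dist p q"
      unfolding d_def using infdist_le order_trans by blast
  qed
qed


lemma hausdorff_lip:
  "\<exists>K. \<forall>p\<in>{0..(1::real)} \<times> cball (0::real^'n) R. \<forall>q\<in>{0..(1::real)} \<times> cball (0::real^'n) R.
      hausdorff_dist (case_prod G p) (case_prod G q) \<le> K * dist p q"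
proof -
  obtain K where K: "\<forall>p\<in>{0..(1::real)} \<times> cball (0::real^'n) R. \<forall>q\<in>{0..(1::real)} \<times> cball (0::real^'n) R. \<forall>P\<in>G (fst p) (snd p).
      infdist P (G (fst q) (snd q)) \<le> K * dist p q"
    using G_lip_pt[of R] by blast
  show ?thesis
  proof (intro exI ballI)
    fix p q :: "real \<times> (real^'n)"
    assume p: "p \<in> {0..1} \<times> cball 0 R" and q: "q \<in> {0..1} \<times> cball 0 R"
    have tp: "fst p \<in> {0..1}" and tq: "fst q \<in> {0..1}" using p q by (auto simp: mem_Times_iff)
    have ne: "G (fst p) (snd p) \<noteq> {}" "G (fst q) (snd q) \<noteq> {}" using G_zero[OF tp] G_zero[OF tq] by auto
    have 1: "(SUP a\<in>G (fst p) (snd p). infdist a (G (fst q) (snd q))) \<le> K * dist p q"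
      by (rule cSUP_least[OF ne(1)]) (use K p q in blast)
    have 2: "(SUP a\<in>G (fst q) (snd q). infdist a (G (fst p) (snd p))) \<le> K * dist p q"
      by (rule cSUP_least[OF ne(2)]) (use K p q dist_commute in metis)
    show "hausdorff_dist (case_prod G p) (case_prod G q) \<le> K * dist p q"
      using 1 2 unfolding hausdorff_dist_def by (simp add: split_beta)
  qed
qed

end

theorem lemma1:
  fixes L :: "real \<Rightarrow> real^'n \<Rightarrow> real^'m \<Rightarrow> real"
    and L' :: "real \<times> (real^'n) \<times> (real^'m) \<Rightarrow> (real \<times> (real^'n) \<times> (real^'m)) \<Rightarrow>\<^sub>L real"
    and g :: "real \<Rightarrow> real^'n \<Rightarrow> ((real^'m) \<Rightarrow>\<^sub>L (real^'n))"
    and g' :: "real \<times> (real^'n) \<Rightarrow> (real \<times> (real^'n)) \<Rightarrow>\<^sub>L ((real^'m) \<Rightarrow>\<^sub>L (real^'n))"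
    and \<theta> :: "real \<Rightarrow> real"
    and \<mu> \<xi> \<delta> c_g c_dg r\<^sub>0 T\<^sub>0 :: real
  assumes L_C1: "C1_on ({0..1} \<times> UNIV \<times> UNIV) (\<lambda>(t, x, u). L t x u) L'"
    and g_C1: "C1_on ({0..1} \<times> UNIV) (\<lambda>(t, x). g t x) g'"
    (* (C1) *)
    and C1a: "\<And>t x u. t \<in> {0..1} \<Longrightarrow> L t x u \<ge> \<theta> (norm u) \<and> \<theta> (norm u) > 0"
    and C1b: "((\<lambda>r. r / \<theta> r) \<longlongrightarrow> 0) at_top"
    (* (C2) *)
    and mu_pos: "\<mu> > 0"
    and C2: "\<And>t x u v. t \<in> {0..1} \<Longrightarrow>
               L t x u + L' (t, x, u) (0, 0, v - u) + \<mu> / 2 * (norm (v - u))\<^sup>2 \<le> L t x v"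
    (* (C3) *)
    and xi_pos: "\<xi> > 0" and delta_pos: "\<delta> > 0"
    and C3: "\<And>t x u. t \<in> {0..1} \<Longrightarrow>
               onorm (\<lambda>(s, y). L' (t, x, u) (s, y, 0)) * norm (g t x u) \<le> \<xi> * L t x u + \<delta>"
    (* (C4) *)
    and cg_pos: "c_g > 0" and cdg_pos: "c_dg > 0"
    and C4: "\<And>t x. t \<in> {0..1} \<Longrightarrow> norm (g t x) \<le> c_g \<and> norm (g' (t, x)) \<le> c_dg"
    (* constants *)
    and r0_pos: "r\<^sub>0 > 0" and r0: "\<And>r. r \<ge> r\<^sub>0 \<Longrightarrow> \<theta> r \<ge> r"
    and T0: "T\<^sub>0 \<in> {0<..<1}"
    and beta: "let c = r\<^sub>0 + integral {0..1} (\<lambda>t. L t 0 0);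
                   \<Omega> = {0..1} \<times> cball 0 (c_g * c);
                   \<sigma> = (\<lambda>r. SUP (t, x, u) \<in> {(t, x, u). (t, x) \<in> \<Omega> \<and> norm u \<le> r}.
                                L' (t, x, u) (0, 0, u) - L t x u)
               in \<sigma> ((c + 1) / T\<^sub>0) > \<delta> / \<xi>"
  shows "let c = r\<^sub>0 + integral {0..1} (\<lambda>t. L t 0 0);
             \<Omega> = {0..1} \<times> cball 0 (c_g * c);
             \<sigma> = (\<lambda>r. SUP (t, x, u) \<in> {(t, x, u). (t, x) \<in> \<Omega> \<and> norm u \<le> r}.
                          L' (t, x, u) (0, 0, u) - L t x u);
             \<beta> = \<sigma> ((c + 1) / T\<^sub>0);
             G = (\<lambda>t y. {(\<rho> / (L t y w + \<beta>), (\<rho> / (L t y w + \<beta>)) *\<^sub>R g t y w)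
                          | w \<rho>. \<rho> \<in> {0..1}})
         in (\<forall>t\<in>{0..1}. \<forall>y. G t y \<noteq> {} \<and> convex (G t y) \<and> compact (G t y)) \<and>
            (\<exists>K. \<forall>p\<in>\<Omega>. \<forall>q\<in>\<Omega>.
                 hausdorff_dist (case_prod G p) (case_prod G q) \<le> K * dist p q)"
proof -
  define c where "c = r\<^sub>0 + integral {0..1} (\<lambda>t. L t 0 0)"
  define \<sigma> where "\<sigma> = (\<lambda>r. SUP (t, x, u) \<in> {(t, x, u). (t, x) \<in> {0..1} \<times> cball 0 (c_g * c) \<and> norm u \<le> r}.
                                L' (t, x, u) (0, 0, u) - L t x u)"
  define \<beta> where "\<beta> = \<sigma> ((c + 1) / T\<^sub>0)"
  have bgt: "\<beta> > \<delta> / \<xi>" using beta unfolding Let_def c_def \<sigma>_def \<beta>_def by simp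
  have bpos: "\<beta> > 0" using bgt xi_pos delta_pos by (smt (verit) divide_pos_pos)
  have C2': "L t x u + L' (t, x, u) (0, 0, v - u) \<le> L t x v" if "t \<in> {0..1}" for t x u v
  proof -
    have "0 \<le> \<mu> / 2 * (norm (v - u))\<^sup>2" using mu_pos by simp
    then show ?thesis using C2[OF that, of x u v] by linarith
  qed
  interpret gs: gset L L' g g' \<theta> \<xi> \<delta> c_g c_dg r\<^sub>0 \<beta>
    by (unfold_locales) (use L_C1 g_C1 C1a C1b C2' xi_pos delta_pos C3 C4 r0_pos r0 bpos in auto)
  have A: "\<forall>t\<in>{0..1}. \<forall>y. gs.G t y \<noteq> {} \<and> convex (gs.G t y) \<and> compact (gs.G t y)"
    using gs.G_zero gs.G_convex gs.G_compact by blast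
  have B: "\<exists>K. \<forall>p\<in>{0..(1::real)} \<times> cball (0::real^'n) (c_g * c). \<forall>q\<in>{0..(1::real)} \<times> cball (0::real^'n) (c_g * c).
      hausdorff_dist (case_prod gs.G p) (case_prod gs.G q) \<le> K * dist p q"
    by (rule gs.hausdorff_lip)
  show ?thesis
    using A B unfolding gs.G_def unfolding Let_def \<beta>_def \<sigma>_def c_def by (rule conjI)
qed

end
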